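(* Let $d\ge 1$ and let $(D,\mathbf{m},E)\in\mathbb{R}\times\mathbb{R}^d\times\mathbb{R}$ satisfy $D>0$ and $E-\sqrt{D^2+|\mathbf{m}|^2}>0$ (in particular $E>|\mathbf{m}|$). For $h>1$ define \[ T(h)=\frac{3h-8}{24}+\frac{\sqrt{(3h+8)^2-96}}{24}, \] and for $\Pi\ge E$ define \[ h(\Pi)=\frac{\sqrt{\Pi^2-|\mathbf{m}|^2}}{D},\qquad S(\Pi)=\Pi^2-\Pi E-D^2\,h(\Pi)\,T\big(h(\Pi)\big). \] Then $S$ has exactly one real root in the open interval $(E,\infty)$.
   Context: This arises for the relativistic hydrodynamics equations closed by the equation of state $h=\frac{2(6p^2+4p\rho+\rho^2)}{\rho(3p+2\rho)}$ (RC-EOS), relating specific enthalpy $h$, pressure $p$ and rest-mass density $\rho$; solving this for $p>0$ gives $p=\rho\,T(h)$. Here $D$ is the relativistic density, $\mathbf{m}$ the momentum density, $E$ the energy density, and $\Pi=E+p$. For $\Pi\ge E$ one has $h(\Pi)>1$, so $S$ is well defined there. *)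

theory Defs
  imports "HOL-Analysis.Analysis"
begin

definition rc_T :: "real \<Rightarrow> real" where
  "rc_T h = (3*h - 8)/24 + sqrt ((3*h + 8)^2 - 96) / 24"

definition rc_h :: "real \<Rightarrow> real ^ 'n \<Rightarrow> real \<Rightarrow> real" where
  "rc_h D m P = sqrt (P^2 - (norm m)^2) / D"

definition rc_S :: "real \<Rightarrow> real ^ 'n \<Rightarrow> real \<Rightarrow> real \<Rightarrow> real" where
  "rc_S D m E P = P^2 - P * E - D^2 * rc_h D m P * rc_T (rc_h D m P)"

end

theory Submission
  imports Defs
begin

lemma T_deriv:
  assumes "h > 1"
  shows "(rc_T has_real_derivative (3 + 3*(3*h+8)/sqrt((3*h+8)^2-96))/24) (at h)"
proof -
  have "(3*h+8)^2 > (11::real)^2" using assms by (intro power_strict_mono) auto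
  then have Q: "(3*h+8)^2 - 96 > 0" by simp
  have s: "((\<lambda>x. sqrt ((3*x+8)^2 - 96)) has_real_derivative (inverse (sqrt ((3*h+8)^2-96)) / 2) * (2*(3*h+8)*3)) (at h)"
    apply (rule DERIV_chain2[where f=sqrt and g="\<lambda>x. (3*x+8)^2-96"])
    using DERIV_real_sqrt[OF Q] apply simp
    apply (rule derivative_eq_intros refl)+
    by simp
  have l: "((\<lambda>x. (3*x-8)/24) has_real_derivative 3/24) (at h)"
    by (rule derivative_eq_intros refl | simp)+
  have "((\<lambda>x. (3*x-8)/24 + sqrt ((3*x+8)^2 - 96)/24) has_real_derivative 3/24 + (inverse (sqrt ((3*h+8)^2-96)) / 2) * (2*(3*h+8)*3)/24) (at h)"
    by (rule DERIV_add[OF l DERIV_cdivide[OF s]])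
  moreover have e: "3/24 + (inverse (sqrt ((3*h+8)^2-96)) / 2) * (2*(3*h+8)*3)/24 = (3 + 3*(3*h+8)/sqrt((3*h+8)^2-96))/24"
    using Q by (simp add: field_simps)
  ultimately show ?thesis unfolding rc_T_def[abs_def] by metis
qed

lemma Tp_bound:
  assumes "h > (1::real)"
  shows "(3 + 3*(3*h+8)/sqrt((3*h+8)^2-96))/24 < 3/4"
proof -
  have "(3*h+8)^2 > (11::real)^2" using assms by (intro power_strict_mono) auto
  then have Q: "(3*h+8)^2 - 96 > 0" by simp
  have sq: "(3*h+8)^2 < (5 * sqrt((3*h+8)^2-96))^2"
    using Q \<open>(3*h+8)^2 > 11^2\<close> by (simp add: power_mult_distrib)
  then have "3*h+8 < 5 * sqrt((3*h+8)^2-96)"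
    using power_less_imp_less_base[OF sq] Q by simp
  then have r: "(3*h+8)/sqrt((3*h+8)^2-96) < 5" using Q by (simp add: divide_less_eq)
  define q where "q = (3*h+8)/sqrt((3*h+8)^2-96)"
  have "3*(3*h+8)/sqrt((3*h+8)^2-96) = 3*q" unfolding q_def by simp
  then show ?thesis using r unfolding q_def[symmetric] by simp
qed

lemma T_pos:
  assumes "h > (1::real)"
  shows "rc_T h > 0"
proof (cases "h \<ge> 8/3")
  case True
  have "(3*h+8)^2 > (11::real)^2" using assms by (intro power_strict_mono) auto
  then have "sqrt ((3*h+8)^2 - 96) > 0" by simp
  moreover have "(3*h-8)/24 \<ge> 0" using True by simp
  ultimately show ?thesis unfolding rc_T_def by (smt (verit) divide_pos_pos)
next
  case False
  have "(8 - 3*h)^2 < (3*h+8)^2 - 96" using assms by (simp add: power2_eq_square algebra_simps)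
  then have "8 - 3*h < sqrt ((3*h+8)^2 - 96)"
    using False real_less_rsqrt by blast
  then show ?thesis unfolding rc_T_def
    by (simp add: add_divide_distrib[symmetric])
qed

lemma T_le:
  assumes "h \<ge> (1::real)"
  shows "rc_T h \<le> h/4"
proof -
  have "sqrt ((3*h+8)^2 - 96) \<le> sqrt ((3*h+8)^2)" by (rule real_sqrt_le_mono) simp
  also have "\<dots> = 3*h+8" using assms by simp
  finally have "(3*h - 8)/24 + sqrt ((3*h + 8)^2 - 96) / 24 \<le> (3*h - 8)/24 + (3*h+8)/24"
    by (simp add: divide_right_mono)
  then show ?thesis unfolding rc_T_def
    by (simp add: add_divide_distrib[symmetric])
qed

lemma h_deriv:
  fixes m :: "real ^ 'n"
  assumes "D > 0" "x^2 - (norm m)^2 > 0"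
  shows "(rc_h D m has_real_derivative x/(D * sqrt(x^2 - (norm m)^2))) (at x)"
proof -
  have s: "((\<lambda>x. sqrt (x^2 - (norm m)^2)) has_real_derivative (inverse (sqrt (x^2 - (norm m)^2)) / 2) * (2*x)) (at x)"
    apply (rule DERIV_chain2[where f=sqrt and g="\<lambda>x. x^2 - (norm m)^2"])
    using DERIV_real_sqrt[OF assms(2)] apply simp
    apply (rule derivative_eq_intros refl)+
    by simp
  have "((\<lambda>x. sqrt (x^2 - (norm m)^2) / D) has_real_derivative (inverse (sqrt (x^2 - (norm m)^2)) / 2) * (2*x) / D) (at x)"
    by (rule DERIV_cdivide[OF s])
  moreover have "(inverse (sqrt (x^2 - (norm m)^2)) / 2) * (2*x) / D = x/(D * sqrt(x^2 - (norm m)^2))"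
    using assms by (simp add: field_simps)
  ultimately show ?thesis unfolding rc_h_def[abs_def] by metis
qed

lemma key_arith:
  fixes D s x H hp T Tp :: real
  assumes "D > 0" "s > 0" "x > 0" "H = s/D" "hp = x/(D * s)" "T \<le> H/4" "T \<ge> 0" "Tp < 3/4"
  shows "1 - ((D^2*(hp*T + H*(Tp*hp)))*x - D^2*H*T)/(x*x) > 0"
proof -
  have H0: "H > 0" using assms by simp
  have a: "D^2*hp/x = 1/H" using assms(1-3) unfolding assms(4,5) by (simp add: field_simps power2_eq_square)
  have "((D^2*(hp*T + H*(Tp*hp)))*x)/(x*x) = (D^2*hp/x)*(T + H*Tp)"
    using assms by (simp add: field_simps power2_eq_square)
  also have "\<dots> = T/H + Tp" unfolding a using H0 by (simp add: field_simps)
  finally have e1: "((D^2*(hp*T + H*(Tp*hp)))*x)/(x*x) = T/H + Tp" .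
  have "T/H \<le> 1/4" using assms(6) H0 by (simp add: divide_le_eq)
  moreover have "D^2*H*T/(x*x) \<ge> 0" using assms H0 by simp
  moreover have "((D^2*(hp*T + H*(Tp*hp)))*x - D^2*H*T)/(x*x) = ((D^2*(hp*T + H*(Tp*hp)))*x)/(x*x) - D^2*H*T/(x*x)"
    by (simp add: diff_divide_distrib)
  ultimately have "((D^2*(hp*T + H*(Tp*hp)))*x - D^2*H*T)/(x*x) < 1"
    using e1 assms(8) by linarith
  then show ?thesis by simp
qed

theorem lemma1:
  fixes D E :: real and m :: "real ^ 'n"
  assumes "D > 0" and "E - sqrt (D^2 + (norm m)^2) > 0"
  shows "\<exists>!P. P \<in> {E<..} \<and> rc_S D m E P = 0"
proof -
  define c where "c = (norm m)^2"
  have c0: "c \<ge> 0" unfolding c_def by simp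
  have "sqrt (D^2 + c) \<ge> 0" using c0 by simp
  have "sqrt (D^2 + (norm m)^2) \<ge> 0" by simp
  then have E0: "E > 0" using assms(2) by linarith
  have "E > sqrt (D^2 + c)" using assms(2) c_def by simp
  then have "E^2 > (sqrt (D^2 + c))^2" using \<open>sqrt (D^2 + c) \<ge> 0\<close> by (intro power_strict_mono) auto
  then have EE: "E^2 > D^2 + c" using c0 by simp
  have pos: "x^2 - c > D^2" if "x \<ge> E" for x
  proof -
    have "x^2 \<ge> E^2" using that E0 by (intro power_mono) auto
    then show ?thesis using EE by simp
  qed
  have hgt: "rc_h D m x > 1" if "x \<ge> E" for x
  proof -
    have "sqrt (x^2 - c) > sqrt (D^2)" using pos[OF that] by (subst real_sqrt_less_iff) simp
    then have "sqrt (x^2 - c) > D" using assms(1) by simp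
    then show ?thesis unfolding rc_h_def c_def[symmetric] using assms(1) by simp
  qed
  have hsq: "D^2 * (rc_h D m x)^2 = x^2 - c" if "x \<ge> E" for x
  proof -
    have "D^2 > 0" using assms(1) by simp
    then have "x^2 - c > 0" using pos[OF that] by linarith
    then show ?thesis unfolding rc_h_def c_def[symmetric] using assms(1)
      by (simp add: power_divide)
  qed
  define F where "F x = x - E - D^2 * rc_h D m x * rc_T (rc_h D m x) / x" for x
  have SF: "rc_S D m E x = x * F x" if "x > 0" for x
    unfolding rc_S_def F_def using that by (simp add: field_simps power2_eq_square)
  have cont: "continuous_on {E..2*E} (rc_S D m E)"
    unfolding rc_S_def[abs_def] rc_h_def rc_T_def using assms(1)
    by (intro continuous_intros) auto
  have SE: "rc_S D m E E < 0"
  proof -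
    have "D^2 * rc_h D m E * rc_T (rc_h D m E) > 0"
      using hgt[of E] T_pos[OF hgt[of E]] assms(1) by simp
    then show ?thesis unfolding rc_S_def by (simp add: power2_eq_square)
  qed
  have S2E: "rc_S D m E (2*E) > 0"
  proof -
    let ?H = "rc_h D m (2*E)"
    have H1: "?H > 1" using hgt[of "2*E"] E0 by simp
    have "D^2 * ?H * rc_T ?H \<le> D^2 * ?H * (?H/4)"
      using T_le[of ?H] H1 assms(1) by (intro mult_left_mono) auto
    also have "\<dots> = (D^2 * ?H^2)/4" by (simp add: power2_eq_square)
    also have "\<dots> = ((2*E)^2 - c)/4" using hsq[of "2*E"] E0 by simp
    also have "\<dots> \<le> E^2" using c0 by (simp add: power2_eq_square)
    finally have "D^2 * ?H * rc_T ?H \<le> E^2" .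
    moreover have "E^2 > 0" using E0 by simp
    ultimately have "D^2 * ?H * rc_T ?H < 2 * E^2" by linarith
    moreover have "(2*E)^2 - 2*E*E = 2*E^2" by (simp add: power2_eq_square)
    ultimately show ?thesis unfolding rc_S_def by linarith
  qed
  obtain x where x: "E \<le> x" "x \<le> 2*E" "rc_S D m E x = 0"
    using IVT'[of "rc_S D m E" E 0 "2*E", OF _ _ _ cont] SE S2E E0 by auto
  have xE: "x > E" using x SE by (cases "x = E") auto
  have Fderiv: "\<exists>y. DERIV F x :> y \<and> y > 0" if "x \<ge> E" for x
  proof -
    have x0: "x > 0" using that E0 by simp
    let ?s = "sqrt (x^2 - c)"
    let ?H = "rc_h D m x"
    let ?hp = "x/(D * ?s)"
    let ?Tp = "(3 + 3*(3*?H+8)/sqrt((3*?H+8)^2-96))/24"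
    have "D^2 > 0" using assms(1) by simp
    then have pc: "x^2 - c > 0" using pos[OF that] by linarith
    have hd: "DERIV (rc_h D m) x :> ?hp" using h_deriv[OF assms(1)] pc c_def by simp
    have H1: "?H > 1" using hgt[OF that] .
    have Td: "DERIV rc_T ?H :> ?Tp" using T_deriv[OF H1] .
    have cd: "DERIV (\<lambda>x. rc_T (rc_h D m x)) x :> ?Tp * ?hp"
      by (rule DERIV_chain2[OF Td hd])
    have pd0: "DERIV (\<lambda>x. rc_h D m x * rc_T (rc_h D m x)) x :> ?hp * rc_T ?H + (?Tp * ?hp) * ?H"
      by (rule DERIV_mult[OF hd cd])
    have pd: "DERIV (\<lambda>x. rc_h D m x * rc_T (rc_h D m x)) x :> ?hp * rc_T ?H + ?H * (?Tp * ?hp)"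
      using pd0 by (simp only: mult.commute[of "?Tp * ?hp"])
    have gd: "DERIV (\<lambda>x. D^2 * (rc_h D m x * rc_T (rc_h D m x))) x :> D^2 * (?hp * rc_T ?H + ?H * (?Tp * ?hp))"
      by (rule DERIV_cmult[OF pd])
    have qd: "DERIV (\<lambda>x. D^2 * (rc_h D m x * rc_T (rc_h D m x)) / x) x :>
       ((D^2 * (?hp * rc_T ?H + ?H * (?Tp * ?hp))) * x - D^2 * (?H * rc_T ?H) * 1) / (x * x)"
      by (rule DERIV_divide[OF gd DERIV_ident]) (use x0 in simp)
    have fd: "DERIV (\<lambda>x. x - E - D^2 * (rc_h D m x * rc_T (rc_h D m x)) / x) x :>
       1 - 0 - ((D^2 * (?hp * rc_T ?H + ?H * (?Tp * ?hp))) * x - D^2 * (?H * rc_T ?H) * 1) / (x * x)"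
      by (intro DERIV_diff DERIV_ident DERIV_const qd)
    have Feq: "F = (\<lambda>x. x - E - D^2 * (rc_h D m x * rc_T (rc_h D m x)) / x)"
      unfolding F_def by (simp add: mult.assoc)
    have spos: "?s > 0" using pc by simp
    have "1 - ((D^2*(?hp*rc_T ?H + ?H*(?Tp*?hp)))*x - D^2*?H*rc_T ?H)/(x*x) > 0"
      apply (rule key_arith[OF assms(1) spos x0])
      using T_le[of ?H] H1 T_pos[OF H1] Tp_bound[OF H1]
      by (auto simp: rc_h_def c_def)
    then show ?thesis using fd Feq by (auto simp: mult.assoc)
  qed
  have Fmono: "F a < F b" if "E \<le> a" "a < b" for a b
    using DERIV_pos_imp_increasing[of a b F] that Fderiv by auto
  show ?thesis
  proof (rule ex1I[of _ x])
    show "x \<in> {E<..} \<and> rc_S D m E x = 0" using xE x by simp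
  next
    fix y assume y: "y \<in> {E<..} \<and> rc_S D m E y = 0"
    have Fx: "F x = 0" using SF[of x] x xE E0 by simp
    have Fy: "F y = 0" using SF[of y] y E0 by simp
    show "y = x"
    proof (rule ccontr)
      assume "y \<noteq> x"
      then have "y < x \<or> x < y" by auto
      then show False using Fmono[of y x] Fmono[of x y] Fx Fy xE y by auto
    qed
  qed
qed

end
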